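(* Let $M$ be a sparse paving matroid of rank $r$ on $n$ elements with $2r\leq n$. Then, averaged over all cyclic orderings of $E(M)$, the number of $r$-intervals that are circuit-hyperplanes of $M$ is less than two.
   Context: A matroid $M$ of rank $r$ is sparse paving if every nonspanning circuit is a hyperplane; equivalently, every $r$-subset of $E(M)$ is a basis or a circuit-hyperplane (a set that is both a circuit and a hyperplane). A cyclic ordering (cycle) on $E(M)$ is a cyclic permutation $\sigma$ of $E(M)$ consisting of a single cycle through all $n$ elements; there are $(n-1)!$ of them. A $k$-interval in $\sigma$ is a set of $k$ cyclically-consecutive elements, i.e., $\{x,\sigma(x),\dots,\sigma^{k-1}(x)\}$ for some $x$. *)

theory Defs
  imports Complex_Main "HOL-Combinatorics.Permutations"
begin

definition matroid_bases :: "'a set \<Rightarrow> 'a set set \<Rightarrow> bool" where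
  "matroid_bases E \<B> \<longleftrightarrow> finite E \<and> \<B> \<noteq> {} \<and> (\<forall>B\<in>\<B>. B \<subseteq> E) \<and>
     (\<forall>B1\<in>\<B>. \<forall>B2\<in>\<B>. \<forall>x\<in>B1 - B2. \<exists>y\<in>B2 - B1. insert y (B1 - {x}) \<in> \<B>)"

definition indep :: "'a set set \<Rightarrow> 'a set \<Rightarrow> bool" where
  "indep \<B> I \<longleftrightarrow> (\<exists>B\<in>\<B>. I \<subseteq> B)"

definition mrank :: "'a set set \<Rightarrow> 'a set \<Rightarrow> nat" where
  "mrank \<B> X = Max (card ` {I. I \<subseteq> X \<and> indep \<B> I})"

definition circuit :: "'a set \<Rightarrow> 'a set set \<Rightarrow> 'a set \<Rightarrow> bool" where
  "circuit E \<B> C \<longleftrightarrow> C \<subseteq> E \<and> \<not> indep \<B> C \<and> (\<forall>e\<in>C. indep \<B> (C - {e}))"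

definition flat :: "'a set \<Rightarrow> 'a set set \<Rightarrow> 'a set \<Rightarrow> bool" where
  "flat E \<B> X \<longleftrightarrow> X \<subseteq> E \<and> (\<forall>e\<in>E - X. mrank \<B> (insert e X) > mrank \<B> X)"

definition hyperplane :: "'a set \<Rightarrow> 'a set set \<Rightarrow> 'a set \<Rightarrow> bool" where
  "hyperplane E \<B> X \<longleftrightarrow> flat E \<B> X \<and> mrank \<B> X = mrank \<B> E - 1"

definition circuit_hyperplane :: "'a set \<Rightarrow> 'a set set \<Rightarrow> 'a set \<Rightarrow> bool" where
  "circuit_hyperplane E \<B> X \<longleftrightarrow> circuit E \<B> X \<and> hyperplane E \<B> X"

definition sparse_paving :: "'a set \<Rightarrow> 'a set set \<Rightarrow> bool" where
  "sparse_paving E \<B> \<longleftrightarrow> matroid_bases E \<B> \<and>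
     (\<forall>C. circuit E \<B> C \<and> mrank \<B> C < mrank \<B> E \<longrightarrow> hyperplane E \<B> C)"

(* cyclic orderings: permutations of E consisting of a single cycle through all elements *)
definition cyclic_orderings :: "'a set \<Rightarrow> ('a \<Rightarrow> 'a) set" where
  "cyclic_orderings E = {\<sigma>. \<sigma> permutes E \<and> (\<forall>x\<in>E. \<forall>y\<in>E. \<exists>k. (\<sigma> ^^ k) x = y)}"

definition interval :: "('a \<Rightarrow> 'a) \<Rightarrow> 'a \<Rightarrow> nat \<Rightarrow> 'a set" where
  "interval \<sigma> x k = {(\<sigma> ^^ i) x | i. i < k}"

definition num_intervals :: "'a set \<Rightarrow> ('a \<Rightarrow> 'a) \<Rightarrow> nat \<Rightarrow> ('a set \<Rightarrow> bool) \<Rightarrow> nat" where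
  "num_intervals E \<sigma> k P = card {I. \<exists>x\<in>E. I = interval \<sigma> x k \<and> P I}"

end

theory Submission
  imports Defs
begin

locale mctx =
  fixes E :: "'a set" and \<B> :: "'a set set" and r :: nat
  assumes mb: "matroid_bases E \<B>" and cr: "\<forall>B\<in>\<B>. card B = r"
begin

lemma finE: "finite E" using mb by (simp add: matroid_bases_def)
lemma BsubE: "B \<in> \<B> \<Longrightarrow> B \<subseteq> E" using mb by (simp add: matroid_bases_def)
lemma Bne: "\<B> \<noteq> {}" using mb by (simp add: matroid_bases_def)

lemma exch: "B1 \<in> \<B> \<Longrightarrow> B2 \<in> \<B> \<Longrightarrow> x \<in> B1 - B2 \<Longrightarrow> \<exists>y\<in>B2 - B1. insert y (B1 - {x}) \<in> \<B>"
  using mb unfolding matroid_bases_def by blast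

lemma indep_sub: "indep \<B> I \<Longrightarrow> I \<subseteq> E \<and> finite I \<and> card I \<le> r"
proof -
  assume "indep \<B> I"
  then obtain B where "B \<in> \<B>" "I \<subseteq> B" by (auto simp: indep_def)
  moreover have "finite B" using BsubE[OF \<open>B \<in> \<B>\<close>] finE finite_subset by blast
  ultimately show ?thesis using BsubE cr card_mono finite_subset by fastforce
qed

lemma indep_empty: "indep \<B> {}" using Bne by (auto simp: indep_def)

lemma indep_mono: "indep \<B> I \<Longrightarrow> J \<subseteq> I \<Longrightarrow> indep \<B> J"
  by (auto simp: indep_def)

lemma indep_basis: "indep \<B> I \<Longrightarrow> card I \<ge> r \<Longrightarrow> I \<in> \<B>"
proof -
  assume a: "indep \<B> I" "card I \<ge> r"
  then obtain B where B: "B \<in> \<B>" "I \<subseteq> B" by (auto simp: indep_def)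
  have "finite B" using BsubE[OF B(1)] finE finite_subset by blast
  hence "I = B" using card_subset_eq[OF _ B(2)] a B cr
    by (metis card_mono antisym)
  thus ?thesis using B by simp
qed

lemma finS: "finite {I. I \<subseteq> X \<and> indep \<B> I}"
proof -
  have "{I. I \<subseteq> X \<and> indep \<B> I} \<subseteq> Pow E" using indep_sub by auto
  thus ?thesis using finE finite_subset by blast
qed

lemma mrank_ge: "I \<subseteq> X \<Longrightarrow> indep \<B> I \<Longrightarrow> card I \<le> mrank \<B> X"
  unfolding mrank_def using finS by (intro Max_ge) auto

lemma mrank_obt: "\<exists>I. I \<subseteq> X \<and> indep \<B> I \<and> card I = mrank \<B> X"
proof -
  have "mrank \<B> X \<in> card ` {I. I \<subseteq> X \<and> indep \<B> I}"
    unfolding mrank_def using finS indep_empty by (intro Max_in) auto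
  thus ?thesis by auto
qed

lemma mrankE: "mrank \<B> E = r"
proof -
  obtain B where B: "B \<in> \<B>" using Bne by auto
  have "r \<le> mrank \<B> E" using mrank_ge[of B E] B BsubE cr by (auto simp: indep_def)
  moreover obtain I where "I \<subseteq> E" "indep \<B> I" "card I = mrank \<B> E" using mrank_obt by blast
  ultimately show ?thesis using indep_sub by fastforce
qed

lemma CH_card: "circuit_hyperplane E \<B> C \<Longrightarrow> C \<noteq> {} \<and> (r \<ge> 1 \<longrightarrow> card C = r)"
proof -
  assume h: "circuit_hyperplane E \<B> C"
  have c1: "circuit E \<B> C" and hp: "hyperplane E \<B> C" using h unfolding circuit_hyperplane_def by blast+
  have c: "C \<subseteq> E" "\<not> indep \<B> C" "\<forall>e\<in>C. indep \<B> (C - {e})"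
    using c1 unfolding circuit_def by blast+
  have hy: "mrank \<B> C = r - 1" using hp mrankE unfolding hyperplane_def by simp
  have fC: "finite C" using c finE finite_subset by blast
  have ne: "C \<noteq> {}" using c indep_empty by auto
  then obtain e where e: "e \<in> C" by auto
  have "card (C - {e}) \<le> mrank \<B> C" using mrank_ge[of "C - {e}" C] c e by auto
  hence g1: "card C - 1 \<le> mrank \<B> C" using e fC by simp
  obtain I where I: "I \<subseteq> C" "indep \<B> I" "card I = mrank \<B> C" using mrank_obt by blast
  have "I \<noteq> C" using I c by auto
  hence "card I < card C" using I fC by (meson psubsetI psubset_card_mono)
  hence "mrank \<B> C = card C - 1" using g1 I by linarith
  moreover have "card C > 0" using ne fC by auto
  ultimately show ?thesis using hy ne by auto
qed

lemma CH_unique: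
  assumes ha: "circuit_hyperplane E \<B> (insert a J)" and hb: "circuit_hyperplane E \<B> (insert b J)"
    and a: "a \<notin> J" and b: "b \<notin> J" and r1: "r \<ge> 1"
  shows "a = b"
proof (rule ccontr)
  assume ab: "a \<noteq> b"
  have ca: "card (insert a J) = r" using CH_card[OF ha] r1 by simp
  have ca1: "circuit E \<B> (insert a J)" using ha unfolding circuit_hyperplane_def by (rule conjunct1)
  have "hyperplane E \<B> (insert a J)" using ha unfolding circuit_hyperplane_def by (rule conjunct2)
  hence fl: "flat E \<B> (insert a J)" unfolding hyperplane_def by (rule conjunct1)
  have cb1: "circuit E \<B> (insert b J)" using hb unfolding circuit_hyperplane_def by (rule conjunct1)
  have cA: "insert a J \<subseteq> E \<and> \<not> indep \<B> (insert a J) \<and> (\<forall>e\<in>insert a J. indep \<B> (insert a J - {e}))"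
    using ca1 unfolding circuit_def .
  have sa: "insert a J \<subseteq> E" and na: "\<not> indep \<B> (insert a J)"
    and da: "\<forall>e\<in>insert a J. indep \<B> (insert a J - {e})"
    using cA by (rule conjunct1, rule conjunct1[OF conjunct2], rule conjunct2[OF conjunct2])
  have cB: "insert b J \<subseteq> E \<and> \<not> indep \<B> (insert b J) \<and> (\<forall>e\<in>insert b J. indep \<B> (insert b J - {e}))"
    using cb1 unfolding circuit_def .
  have sb: "insert b J \<subseteq> E" and nb: "\<not> indep \<B> (insert b J)"
    using cB by (rule conjunct1, rule conjunct1[OF conjunct2])
  have "J \<subseteq> E" using sa by simp
  hence fJ: "finite J" using finE by (rule finite_subset)
  hence cJ: "card J = r - 1" using ca a by simp
  have "insert a J - {a} = J" using a by blast
  moreover have "indep \<B> (insert a J - {a})" by (rule bspec[OF da insertI1])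
  ultimately have iJ: "indep \<B> J" by simp
  have bE: "b \<in> E" using sb by blast
  have "b \<in> E - insert a J" using bE ab b by blast
  moreover have "\<forall>e\<in>E - insert a J. mrank \<B> (insert e (insert a J)) > mrank \<B> (insert a J)"
    using fl unfolding flat_def by (rule conjunct2)
  ultimately have "mrank \<B> (insert b (insert a J)) > mrank \<B> (insert a J)" by (rule bspec[rotated])
  moreover have "card J \<le> mrank \<B> (insert a J)" using mrank_ge[of J "insert a J"] iJ by auto
  ultimately have mr: "mrank \<B> (insert b (insert a J)) \<ge> r" using cJ r1 by linarith
  obtain I where I0: "I \<subseteq> insert b (insert a J)" "indep \<B> I" "card I = mrank \<B> (insert b (insert a J))"
    using mrank_obt by blast
  have I: "I \<subseteq> insert b (insert a J)" "indep \<B> I" "card I \<ge> r" using I0 mr by auto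
  have IB: "I \<in> \<B>" using indep_basis I by auto
  obtain B0 where B0: "B0 \<in> \<B>" "J \<subseteq> B0" using iJ by (auto simp: indep_def)
  have "card B0 = r" using cr B0 by auto
  hence "J \<noteq> B0" using cJ r1 by (metis diff_less less_numeral_extra(1) less_not_refl2 less_le_trans order_refl)
  then obtain c where c: "c \<in> B0" "c \<notin> J" using B0 by auto
  have "c \<noteq> a"
  proof
    assume "c = a" hence "insert a J \<subseteq> B0" using B0 c by blast
    hence "indep \<B> (insert a J)" using B0(1) unfolding indep_def by blast
    thus False using na by blast
  qed
  moreover have "c \<noteq> b"
  proof
    assume "c = b" hence "insert b J \<subseteq> B0" using B0 c by blast
    hence "indep \<B> (insert b J)" using B0(1) unfolding indep_def by blast
    thus False using nb by blast
  qed
  ultimately have "c \<notin> I" using I c by auto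
  hence "c \<in> B0 - I" using c by blast
  then obtain y where y: "y \<in> I - B0" "insert y (B0 - {c}) \<in> \<B>"
    using exch B0(1) IB by blast
  have "y = a \<or> y = b" using y I B0 by auto
  have "insert y J \<subseteq> insert y (B0 - {c})" using B0 c by auto
  hence "indep \<B> (insert y J)" using y(2) unfolding indep_def by blast
  thus False using na nb \<open>y = a \<or> y = b\<close> by blast
qed

end


lemma pow_conj:
  assumes "t \<circ> t = id"
  shows "(t \<circ> \<sigma> \<circ> t) ^^ i = t \<circ> (\<sigma> ^^ i) \<circ> t"
proof (induction i)
  case 0 thus ?case using assms by simp
next
  case (Suc i)
  have "(t \<circ> \<sigma> \<circ> t) ^^ Suc i = (t \<circ> \<sigma> \<circ> t) \<circ> (t \<circ> (\<sigma> ^^ i) \<circ> t)"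
    by (simp only: funpow.simps(2) Suc.IH)
  also have "\<dots> = t \<circ> \<sigma> \<circ> (t \<circ> t) \<circ> (\<sigma> ^^ i) \<circ> t" by (simp add: comp_assoc)
  also have "\<dots> = t \<circ> (\<sigma> ^^ Suc i) \<circ> t" using assms by (simp add: comp_assoc)
  finally show ?case .
qed

lemma interval_conj:
  assumes "t \<circ> t = id"
  shows "interval (t \<circ> \<sigma> \<circ> t) (t z) k = t ` interval \<sigma> z k"
proof -
  have tt: "t (t w) = w" for w using assms by (metis comp_apply id_apply)
  show ?thesis unfolding interval_def pow_conj[OF assms] using tt by auto
qed

lemma interval_img: "interval \<sigma> z k = (\<lambda>i. (\<sigma> ^^ i) z) ` {..<k}"
  unfolding interval_def by auto

lemma card_interval: "card (interval \<sigma> z k) \<le> k"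
  unfolding interval_img by (rule order_trans[OF card_image_le]) simp_all

lemma fin_interval: "finite (interval \<sigma> z k)"
  unfolding interval_img by simp

lemma interval_0: "interval \<sigma> z 0 = {}" unfolding interval_def by simp

lemma interval_Suc: "interval \<sigma> z (Suc k) = insert z (interval \<sigma> (\<sigma> z) k)"
proof -
  have "(\<sigma> ^^ Suc i) z = (\<sigma> ^^ i) (\<sigma> z)" for i by (simp add: funpow_Suc_right del: funpow.simps)
  thus ?thesis unfolding interval_img lessThan_Suc_eq_insert_0 image_insert image_image
    by simp
qed

lemma tt_id: "Transposition.transpose x y \<circ> Transposition.transpose x y = id"
  by simp

lemma cyc_conj:
  assumes "\<sigma> \<in> cyclic_orderings E" "x \<in> E" "y \<in> E"
  shows "Transposition.transpose x y \<circ> \<sigma> \<circ> Transposition.transpose x y \<in> cyclic_orderings E"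
proof -
  let ?t = "Transposition.transpose x y"
  have tp: "?t permutes E" using permutes_swap_id assms by metis
  have sp: "\<sigma> permutes E" using assms by (simp add: cyclic_orderings_def)
  have p: "?t \<circ> \<sigma> \<circ> ?t permutes E" using permutes_compose[OF tp permutes_compose[OF sp tp]]
    by (simp add: comp_assoc)
  have "\<forall>u\<in>E. \<forall>v\<in>E. \<exists>k. ((?t \<circ> \<sigma> \<circ> ?t) ^^ k) u = v"
  proof (intro ballI)
    fix u v assume that: "u \<in> E" "v \<in> E"
    have "?t u \<in> E" "?t v \<in> E" using permutes_in_image[OF tp] that by auto
    then obtain k where "(\<sigma> ^^ k) (?t u) = ?t v" using assms(1) by (auto simp: cyclic_orderings_def)
    hence "((?t \<circ> \<sigma> \<circ> ?t) ^^ k) u = v" unfolding pow_conj[OF tt_id] by simp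
    thus "\<exists>k. ((?t \<circ> \<sigma> \<circ> ?t) ^^ k) u = v" by blast
  qed
  thus ?thesis using p unfolding cyclic_orderings_def by blast
qed

theorem lemma2p7:
  fixes E :: "'a set" and \<B> :: "'a set set" and r :: nat
  assumes "sparse_paving E \<B>"
    and "\<forall>B\<in>\<B>. card B = r"
    and "2 * r \<le> card E"
  shows "(\<Sum>\<sigma>\<in>cyclic_orderings E. real (num_intervals E \<sigma> r (circuit_hyperplane E \<B>)))
           / real (card (cyclic_orderings E)) < 2"
proof -
  interpret mctx E \<B> r using assms by unfold_locales (auto simp: sparse_paving_def)
  define C where "C = cyclic_orderings E"
  define CH where "CH = circuit_hyperplane E \<B>"
  define n where "n = card E"
  define N where "N = card C"
  define Q where "Q = (\<lambda>\<sigma>. {x\<in>E. CH (interval \<sigma> x r)})"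
  define P where "P = Sigma C Q"
  define J where "J = (\<lambda>p::('a \<Rightarrow> 'a) \<times> 'a. interval (fst p) (fst p (snd p)) (r - 1))"
  define T where "T = Sigma P (\<lambda>p. E - J p)"
  define f where "f = (\<lambda>(p::('a \<Rightarrow> 'a) \<times> 'a, y::'a).
      (Transposition.transpose (snd p) y \<circ> fst p \<circ> Transposition.transpose (snd p) y, y))"
  have finC: "finite C" unfolding C_def cyclic_orderings_def
    using finite_permutations[OF finE] by (rule finite_subset[rotated]) auto
  have finQ: "finite (Q \<sigma>)" for \<sigma> unfolding Q_def using finE by simp
  have finP: "finite P" unfolding P_def using finC finQ by simp
  have cardP: "card P = (\<Sum>\<sigma>\<in>C. card (Q \<sigma>))" unfolding P_def
    by (rule card_SigmaI[OF finC]) (simp add: finQ)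
  have num_le: "num_intervals E \<sigma> r CH \<le> card (Q \<sigma>)" for \<sigma>
  proof -
    have "{I. \<exists>x\<in>E. I = interval \<sigma> x r \<and> CH I} = (\<lambda>x. interval \<sigma> x r) ` Q \<sigma>"
      unfolding Q_def by auto
    thus ?thesis unfolding num_intervals_def by (simp add: card_image_le[OF finQ])
  qed
  have sum_le: "(\<Sum>\<sigma>\<in>C. real (num_intervals E \<sigma> r CH)) \<le> real (card P)"
    unfolding cardP of_nat_sum by (intro sum_mono) (use num_le in auto)
  have Pprop: "r \<ge> 1 \<and> interval \<sigma> x r = insert x (J (\<sigma>, x)) \<and> x \<notin> J (\<sigma>, x)
      \<and> card (J (\<sigma>, x)) = r - 1 \<and> CH (insert x (J (\<sigma>, x))) \<and> x \<in> E \<and> \<sigma> \<in> C"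
    if "(\<sigma>, x) \<in> P" for \<sigma> x
  proof -
    have ch: "CH (interval \<sigma> x r)" "x \<in> E" "\<sigma> \<in> C" using that by (auto simp: P_def Q_def)
    have r1: "r \<ge> 1"
    proof (rule ccontr)
      assume "\<not> r \<ge> 1" hence "r = 0" by simp
      thus False using CH_card[of "interval \<sigma> x r"] ch interval_0[of \<sigma> x] unfolding CH_def by simp
    qed
    hence eq: "interval \<sigma> x r = insert x (J (\<sigma>, x))"
      unfolding J_def using interval_Suc[of \<sigma> x "r - 1"] by simp
    have cI: "card (interval \<sigma> x r) = r" using CH_card[of "interval \<sigma> x r"] ch r1 unfolding CH_def by blast
    have cJ: "card (J (\<sigma>, x)) \<le> r - 1" unfolding J_def by (rule card_interval)
    have fJ: "finite (J (\<sigma>, x))" unfolding J_def by (rule fin_interval)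
    have "x \<notin> J (\<sigma>, x)"
    proof
      assume "x \<in> J (\<sigma>, x)"
      hence "interval \<sigma> x r = J (\<sigma>, x)" using eq by auto
      thus False using cI cJ r1 by simp
    qed
    hence "card (J (\<sigma>, x)) = r - 1" using eq cI fJ by simp
    thus ?thesis using r1 eq \<open>x \<notin> J (\<sigma>, x)\<close> ch by simp
  qed
  have cardT: "card T = (\<Sum>p\<in>P. card (E - J p))" unfolding T_def
    by (rule card_SigmaI[OF finP]) (simp add: finE)
  have cardT_ge: "card P * (n + 1 - r) \<le> card T"
  proof -
    have "n + 1 - r \<le> card (E - J p)" if "p \<in> P" for p
    proof -
      obtain \<sigma> x where p: "p = (\<sigma>, x)" by (cases p)
      have "card (J p) = r - 1" "r \<ge> 1" using Pprop[of \<sigma> x] that p by auto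
      moreover have "card E - card (J p) \<le> card (E - J p)"
        by (rule diff_card_le_card_Diff) (simp add: J_def fin_interval)
      ultimately show ?thesis unfolding n_def by linarith
    qed
    hence "(\<Sum>p\<in>P. n + 1 - r) \<le> (\<Sum>p\<in>P. card (E - J p))" by (rule sum_mono)
    thus ?thesis using cardT by (simp add: mult.commute)
  qed
  have img: "f ` T \<subseteq> C \<times> E"
  proof
    fix z assume "z \<in> f ` T"
    then obtain \<sigma> x y where z: "z = f ((\<sigma>, x), y)" "(\<sigma>, x) \<in> P" "y \<in> E"
      unfolding T_def by auto
    thus "z \<in> C \<times> E" using cyc_conj[of \<sigma> E x y] Pprop[OF z(2)] unfolding f_def C_def by auto
  qed
  have inj: "inj_on f T"
  proof (rule inj_onI)
    fix a b assume a: "a \<in> T" and b: "b \<in> T" and fab: "f a = f b"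
    obtain \<sigma>1 x1 y1 where a': "a = ((\<sigma>1, x1), y1)" by (metis prod.collapse)
    obtain \<sigma>2 x2 y2 where b': "b = ((\<sigma>2, x2), y2)" by (metis prod.collapse)
    let ?t1 = "Transposition.transpose x1 y1"
    let ?t2 = "Transposition.transpose x2 y2"
    have P1: "(\<sigma>1, x1) \<in> P" "y1 \<in> E - J (\<sigma>1, x1)" using a a' by (auto simp: T_def)
    have P2: "(\<sigma>2, x2) \<in> P" "y2 \<in> E - J (\<sigma>2, x2)" using b b' by (auto simp: T_def)
    have yy: "y1 = y2" and ss: "?t1 \<circ> \<sigma>1 \<circ> ?t1 = ?t2 \<circ> \<sigma>2 \<circ> ?t2"
      using fab a' b' by (auto simp: f_def)
    define \<sigma>' where "\<sigma>' = ?t1 \<circ> \<sigma>1 \<circ> ?t1"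
    have fix1: "?t1 ` J (\<sigma>1, x1) = J (\<sigma>1, x1)"
    proof -
      have nx: "x1 \<notin> J (\<sigma>1, x1)" using Pprop[OF P1(1)] by blast
      have "\<forall>w\<in>J (\<sigma>1, x1). ?t1 w = w"
      proof
        fix w assume "w \<in> J (\<sigma>1, x1)"
        hence "w \<noteq> x1" "w \<noteq> y1" using nx P1(2) by auto
        thus "?t1 w = w" by simp
      qed
      thus ?thesis by (simp add: image_cong[of _ _ _ id])
    qed
    have fix2: "?t2 ` J (\<sigma>2, x2) = J (\<sigma>2, x2)"
    proof -
      have nx: "x2 \<notin> J (\<sigma>2, x2)" using Pprop[OF P2(1)] by blast
      have "\<forall>w\<in>J (\<sigma>2, x2). ?t2 w = w"
      proof
        fix w assume "w \<in> J (\<sigma>2, x2)"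
        hence "w \<noteq> x2" "w \<noteq> y2" using nx P2(2) by auto
        thus "?t2 w = w" by simp
      qed
      thus ?thesis by (simp add: image_cong[of _ _ _ id])
    qed
    have e1: "interval \<sigma>' (\<sigma>' y1) (r - 1) = J (\<sigma>1, x1)"
    proof -
      have "\<sigma>' y1 = ?t1 (\<sigma>1 x1)" unfolding \<sigma>'_def by simp
      hence "interval \<sigma>' (\<sigma>' y1) (r - 1) = ?t1 ` interval \<sigma>1 (\<sigma>1 x1) (r - 1)"
        unfolding \<sigma>'_def by (simp only: interval_conj[OF tt_id])
      thus ?thesis using fix1 unfolding J_def by simp
    qed
    have e2: "interval \<sigma>' (\<sigma>' y1) (r - 1) = J (\<sigma>2, x2)"
    proof -
      have s2: "\<sigma>' = ?t2 \<circ> \<sigma>2 \<circ> ?t2" using ss \<sigma>'_def by simp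
      have "\<sigma>' y1 = ?t2 (\<sigma>2 x2)" unfolding s2 yy by simp
      hence "interval \<sigma>' (\<sigma>' y1) (r - 1) = ?t2 ` interval \<sigma>2 (\<sigma>2 x2) (r - 1)"
        unfolding s2 by (simp only: interval_conj[OF tt_id])
      thus ?thesis using fix2 unfolding J_def by simp
    qed
    have JJ: "J (\<sigma>1, x1) = J (\<sigma>2, x2)" using e1 e2 by simp
    have h1: "CH (insert x1 (J (\<sigma>1, x1)))" "x1 \<notin> J (\<sigma>1, x1)" "r \<ge> 1"
      using Pprop[OF P1(1)] by blast+
    have h2: "CH (insert x2 (J (\<sigma>1, x1)))" "x2 \<notin> J (\<sigma>1, x1)"
      using Pprop[OF P2(1)] JJ by simp_all
    have xx: "x1 = x2"
      using CH_unique[OF h1(1)[unfolded CH_def] h2(1)[unfolded CH_def] h1(2) h2(2) h1(3)] .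
    have "\<sigma>1 = ?t1 \<circ> \<sigma>' \<circ> ?t1" unfolding \<sigma>'_def by (simp add: fun_eq_iff)
    also have "\<dots> = ?t2 \<circ> (?t2 \<circ> \<sigma>2 \<circ> ?t2) \<circ> ?t2" using ss xx yy unfolding \<sigma>'_def by simp
    also have "\<dots> = \<sigma>2" by (simp add: fun_eq_iff)
    finally show "a = b" using a' b' xx yy by simp
  qed
  have "card T \<le> card (C \<times> E)"
    using card_inj_on_le[OF inj img] finC finE by simp
  hence key: "card P * (n + 1 - r) \<le> N * n" using cardT_ge unfolding N_def n_def by (simp add: card_cartesian_product)
  have nr: "n < 2 * (n + 1 - r)" using assms(3) unfolding n_def by linarith
  show ?thesis
  proof (cases "N = 0")
    case True thus ?thesis unfolding N_def C_def by simp
  next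
    case False
    have "N * n < N * (2 * (n + 1 - r))" using nr False by simp
    also have "\<dots> = (2 * N) * (n + 1 - r)" by simp
    finally have "card P * (n + 1 - r) < (2 * N) * (n + 1 - r)" using key by linarith
    hence "card P < 2 * N" by simp
    hence "real (card P) < 2 * real N" by linarith
    hence "(\<Sum>\<sigma>\<in>C. real (num_intervals E \<sigma> r CH)) < 2 * real N" using sum_le by linarith
    thus ?thesis using False unfolding N_def C_def CH_def by (simp add: divide_less_eq)
  qed
qed

end
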